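(* Let $\mathcal M$ be a factor and let $U=U^*\in\mathcal M$ be a unitary with $U\neq I$ and $U\neq -I$. Then there is a nonzero projection $E\in\mathcal M$ such that $EUE=0$. *)

theory Defs
  imports "HOL-Analysis.Analysis"
begin

class chilbert = banach +
  fixes scaleC :: "complex \<Rightarrow> 'a \<Rightarrow> 'a"
    and cinner :: "'a \<Rightarrow> 'a \<Rightarrow> complex"
  assumes scaleC_add_right: "scaleC a (x + y) = scaleC a x + scaleC a y"
    and scaleC_add_left: "scaleC (a + b) x = scaleC a x + scaleC b x"
    and scaleC_scaleC: "scaleC a (scaleC b x) = scaleC (a * b) x"
    and scaleC_one: "scaleC 1 x = x"
    and scaleC_of_real: "scaleC (complex_of_real r) x = scaleR r x"
    and cinner_conj: "cinner x y = cnj (cinner y x)"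
    and cinner_add_right: "cinner x (y + z) = cinner x y + cinner x z"
    and cinner_scaleC_right: "cinner x (scaleC a y) = a * cinner x y"
    and cinner_self_norm: "cinner x x = complex_of_real ((norm x)\<^sup>2)"

definition bounded_clinear_op :: "('a::chilbert \<Rightarrow> 'a) \<Rightarrow> bool" where
  "bounded_clinear_op T \<longleftrightarrow>
     (\<forall>x y. T (x + y) = T x + T y) \<and> (\<forall>c x. T (scaleC c x) = scaleC c (T x)) \<and>
     (\<exists>K. \<forall>x. norm (T x) \<le> norm x * K)"

definition adj :: "('a::chilbert \<Rightarrow> 'a) \<Rightarrow> ('a \<Rightarrow> 'a)" where
  "adj T = (THE S. \<forall>x y. cinner (T x) y = cinner x (S y))"

definition commutant :: "('a::chilbert \<Rightarrow> 'a) set \<Rightarrow> ('a \<Rightarrow> 'a) set" where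
  "commutant S = {T. bounded_clinear_op T \<and> (\<forall>A\<in>S. T \<circ> A = A \<circ> T)}"

definition von_neumann_algebra :: "('a::chilbert \<Rightarrow> 'a) set \<Rightarrow> bool" where
  "von_neumann_algebra M \<longleftrightarrow>
     M \<subseteq> Collect bounded_clinear_op \<and> id \<in> M \<and>
     (\<forall>A\<in>M. \<forall>B\<in>M. (\<lambda>x. A x + B x) \<in> M \<and> A \<circ> B \<in> M) \<and>
     (\<forall>c. \<forall>A\<in>M. (\<lambda>x. scaleC c (A x)) \<in> M) \<and>
     (\<forall>A\<in>M. adj A \<in> M) \<and>
     commutant (commutant M) = M"

definition factor :: "('a::chilbert \<Rightarrow> 'a) set \<Rightarrow> bool" where
  "factor M \<longleftrightarrow> von_neumann_algebra M \<and>
     M \<inter> commutant M = range (\<lambda>c::complex. (\<lambda>x. scaleC c x))"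

definition unitary_op :: "('a::chilbert \<Rightarrow> 'a) \<Rightarrow> bool" where
  "unitary_op U \<longleftrightarrow> bounded_clinear_op U \<and> U \<circ> adj U = id \<and> adj U \<circ> U = id"

definition projection_op :: "('a::chilbert \<Rightarrow> 'a) \<Rightarrow> bool" where
  "projection_op E \<longleftrightarrow> bounded_clinear_op E \<and> adj E = E \<and> E \<circ> E = E"

end

theory Submission
  imports Defs "HOL-Computational_Algebra.Formal_Power_Series"
begin


lemma cinner_scaleC_left: "cinner (scaleC a x) y = cnj a * cinner x y"
proof -
  have "cinner (scaleC a x) y = cnj (cinner y (scaleC a x))" by (rule cinner_conj)
  also have "\<dots> = cnj a * cnj (cinner y x)" by (simp add: cinner_scaleC_right)
  also have "cnj (cinner y x) = cinner x y" by (metis cinner_conj complex_cnj_cnj)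
  finally show ?thesis .
qed

lemma cinner_add_left: "cinner (x + y) z = cinner x z + cinner y z"
  by (metis cinner_conj cinner_add_right complex_cnj_add)

lemma cinner_zero_right[simp]: "cinner x 0 = 0"
  using cinner_add_right[of x 0 0] by simp

lemma cinner_zero_left[simp]: "cinner 0 x = 0"
  using cinner_add_left[of 0 0 x] by simp

lemma cinner_minus_right: "cinner x (- y) = - cinner x y"
  using cinner_add_right[of x y "-y"] by (simp add: add_eq_0_iff)

lemma cinner_minus_left: "cinner (- x) y = - cinner x y"
  using cinner_add_left[of x "-x" y] by (simp add: add_eq_0_iff)

lemma cinner_diff_right: "cinner x (y - z) = cinner x y - cinner x z"
  using cinner_add_right[of x y "-z"] cinner_minus_right[of x z] by simp

lemma cinner_diff_left: "cinner (x - y) z = cinner x z - cinner y z"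
  using cinner_add_left[of x "-y" z] cinner_minus_left[of y z] by simp

lemma scaleC_zero_left[simp]: "scaleC 0 x = 0"
  by (metis scaleC_of_real of_real_0 scale_zero_left)

lemma scaleC_zero_right[simp]: "scaleC a 0 = 0"
  using scaleC_add_right[of a 0 0] by simp

lemma scaleC_minus_right: "scaleC a (- x) = - scaleC a x"
proof -
  have "scaleC a x + scaleC a (-x) = 0" by (metis scaleC_add_right add.right_inverse scaleC_zero_right)
  then show ?thesis by (simp add: add_eq_0_iff)
qed

lemma scaleC_diff_right: "scaleC a (x - y) = scaleC a x - scaleC a y"
  using scaleC_add_right[of a x "-y"] scaleC_minus_right[of a y] by simp

lemma scaleC_minus_left: "scaleC (- a) x = - scaleC a x"
proof -
  have "scaleC a x + scaleC (-a) x = 0" by (metis scaleC_add_left add.right_inverse scaleC_zero_left)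
  then show ?thesis by (simp add: add_eq_0_iff)
qed

lemma scaleC_diff_left: "scaleC (a - b) x = scaleC a x - scaleC b x"
  using scaleC_add_left[of a "-b" x] scaleC_minus_left[of b x] by simp

lemma scaleC_minus1: "scaleC (-1) x = - x"
  using scaleC_minus_left[of 1 x] scaleC_one by simp

lemma scaleR_scaleC: "r *\<^sub>R scaleC a x = scaleC (of_real r * a) x"
  by (metis scaleC_of_real scaleC_scaleC)

lemma scaleC_scaleR: "scaleC a (r *\<^sub>R x) = scaleC (of_real r * a) x"
  by (metis scaleC_of_real scaleC_scaleC mult.commute)

lemma cinner_scaleR_right: "cinner x (r *\<^sub>R y) = of_real r * cinner x y"
  by (metis scaleC_of_real cinner_scaleC_right)

lemma cinner_scaleR_left: "cinner (r *\<^sub>R x) y = of_real r * cinner x y"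
  by (metis scaleC_of_real cinner_scaleC_left complex_cnj_complex_of_real)

lemma cinner_self: "cinner x x = of_real ((norm x)\<^sup>2)"
  by (rule cinner_self_norm)

lemma cinner_self_eq_0[simp]: "cinner x x = 0 \<longleftrightarrow> x = 0"
  by (simp add: cinner_self_norm)

lemma norm_scaleC: "norm (scaleC a x) = cmod a * norm x"
proof -
  have "cinner (scaleC a x) (scaleC a x) = cnj a * a * cinner x x"
    by (simp add: cinner_scaleC_left cinner_scaleC_right)
  also have "\<dots> = complex_of_real ((cmod a * norm x)\<^sup>2)"
    using complex_norm_square[of a] by (simp add: cinner_self_norm power_mult_distrib mult.commute)
  finally have "(norm (scaleC a x))\<^sup>2 = (cmod a * norm x)\<^sup>2"
    unfolding cinner_self_norm using of_real_eq_iff by blast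
  then show ?thesis
    by (simp add: power2_eq_iff_nonneg)
qed

lemma norm_diff_sq:
  "(norm (x - y))\<^sup>2 = (norm x)\<^sup>2 - 2 * Re (cinner x y) + (norm y)\<^sup>2"
proof -
  have "cinner (x - y) (x - y) = cinner x x - (cinner x y + cnj (cinner x y)) + cinner y y"
    by (simp add: cinner_diff_left cinner_diff_right cinner_conj[of y x])
  then have "Re (cinner (x - y) (x - y)) = Re (cinner x x - (cinner x y + cnj (cinner x y)) + cinner y y)"
    by simp
  then show ?thesis by (simp add: cinner_self_norm del: of_real_power)
qed

lemma norm_add_sq:
  "(norm (x + y))\<^sup>2 = (norm x)\<^sup>2 + 2 * Re (cinner x y) + (norm y)\<^sup>2"
  using norm_diff_sq[of x "-y"] by (simp add: cinner_minus_right)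

lemma Cauchy_Schwarz: "cmod (cinner x y) \<le> norm x * norm y"
proof (cases "x = 0")
  case True then show ?thesis by simp
next
  case False
  define t where "t = cinner x y / cinner x x"
  define z where "z = y - scaleC t x"
  have nx: "cinner x x \<noteq> 0" using False by simp
  have xz: "cinner x z = 0"
    using nx by (simp add: z_def t_def cinner_diff_right cinner_scaleC_right)
  have "y = z + scaleC t x" by (simp add: z_def)
  then have "(norm y)\<^sup>2 = (norm z)\<^sup>2 + 2 * Re (cinner z (scaleC t x)) + (norm (scaleC t x))\<^sup>2"
    by (metis norm_add_sq)
  moreover have "cinner z (scaleC t x) = 0"
    using xz by (simp add: cinner_scaleC_right) (metis cinner_conj complex_cnj_zero)
  ultimately have "(norm y)\<^sup>2 \<ge> (norm (scaleC t x))\<^sup>2" by simp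
  also have "norm (scaleC t x) = cmod (cinner x y) / norm x"
  proof -
    have "cmod (cinner x x) = (norm x)\<^sup>2" by (simp add: cinner_self_norm del: of_real_power)
    then show ?thesis using False
      by (simp add: norm_scaleC t_def norm_divide power2_eq_square)
  qed
  finally have "(cmod (cinner x y) / norm x)\<^sup>2 \<le> (norm y)\<^sup>2" .
  then have "cmod (cinner x y) / norm x \<le> norm y"
    using power2_le_imp_le by fastforce
  then show ?thesis using False by (simp add: divide_le_eq mult.commute)
qed

lemma cinner_ext_right: "(\<And>z. cinner z x = cinner z y) \<Longrightarrow> x = y"
  by (metis cinner_diff_right cinner_self_eq_0 right_minus_eq)

lemma cinner_ext_left: "(\<And>z. cinner x z = cinner y z) \<Longrightarrow> x = y"
  by (metis cinner_diff_left cinner_self_eq_0 right_minus_eq)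

lemma bounded_linear_cinner_right: "bounded_linear (cinner x)"
proof (rule bounded_linear_intro[where K="norm x"])
  show "cinner x (a + b) = cinner x a + cinner x b" for a b by (rule cinner_add_right)
  show "cinner x (r *\<^sub>R a) = r *\<^sub>R cinner x a" for r a
    by (simp add: cinner_scaleR_right scaleR_conv_of_real)
  show "norm (cinner x a) \<le> norm a * norm x" for a
    using Cauchy_Schwarz[of x a] by (simp add: mult.commute)
qed

lemma bounded_linear_cinner_left: "bounded_linear (\<lambda>x. cinner x y)"
proof (rule bounded_linear_intro[where K="norm y"])
  show "cinner (a + b) y = cinner a y + cinner b y" for a b by (rule cinner_add_left)
  show "cinner (r *\<^sub>R a) y = r *\<^sub>R cinner a y" for r a
    by (simp add: cinner_scaleR_left scaleR_conv_of_real)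
  show "norm (cinner a y) \<le> norm a * norm y" for a
    using Cauchy_Schwarz[of a y] by simp
qed


definition csub :: "'a::chilbert set \<Rightarrow> bool" where
  "csub K \<longleftrightarrow> 0 \<in> K \<and> (\<forall>x\<in>K. \<forall>y\<in>K. x + y \<in> K) \<and> (\<forall>c. \<forall>x\<in>K. scaleC c x \<in> K)"

lemma csub_diff: "csub K \<Longrightarrow> x \<in> K \<Longrightarrow> y \<in> K \<Longrightarrow> x - y \<in> K"
  unfolding csub_def by (metis scaleC_minus1 diff_conv_add_uminus)

lemma csub_scaleR: "csub K \<Longrightarrow> x \<in> K \<Longrightarrow> r *\<^sub>R x \<in> K"
  unfolding csub_def by (metis scaleC_of_real)

lemma parallelogram:
  fixes a b :: "'a::chilbert"
  shows "(norm (a - b))\<^sup>2 + (norm (a + b))\<^sup>2 = 2 * (norm a)\<^sup>2 + 2 * (norm b)\<^sup>2"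
  using norm_add_sq[of a b] norm_diff_sq[of a b] by simp

lemma proj_exists:
  fixes x :: "'a::chilbert"
  assumes cl: "closed K" and cs: "csub K"
  shows "\<exists>p\<in>K. \<forall>k\<in>K. cinner k (x - p) = 0"
proof -
  define d where "d = infdist x K"
  have K0: "0 \<in> K" using cs by (simp add: csub_def)
  have dle: "d \<le> norm (x - k)" if "k \<in> K" for k
    using infdist_le[OF that, of x] by (simp add: d_def dist_norm)
  have d0: "0 \<le> d" by (simp add: d_def infdist_nonneg)
  have "\<exists>k\<in>K. norm (x - k) < d + inverse (real (Suc n))" for n
  proof -
    have "infdist x K < d + inverse (real (Suc n))" by (simp add: d_def)
    then have "(INF a\<in>K. dist x a) < d + inverse (real (Suc n))"
      using K0 by (metis empty_iff infdist_notempty)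
    then obtain a where "a \<in> K" "dist x a < d + inverse (real (Suc n))"
      using cINF_less_iff[of K "dist x"] K0 by auto
    then show ?thesis by (auto simp: dist_norm)
  qed
  then obtain k where kK: "\<And>n. k n \<in> K" and kd: "\<And>n. norm (x - k n) < d + inverse (real (Suc n))"
    by metis
  define e where "e n = inverse (real (Suc n))" for n
  have e0: "0 < e n" "e n \<le> 1" for n by (auto simp: e_def field_simps)
  have key: "(norm (k n - k m))\<^sup>2 \<le> (4 * d + 2) * (e n + e m)" for n m
  proof -
    define mid where "mid = (1/2::real) *\<^sub>R (k n + k m)"
    have "mid \<in> K" using cs kK unfolding mid_def csub_def by (metis scaleC_of_real)
    then have md: "d \<le> norm (x - mid)" by (rule dle)
    have "(x - k m) + (x - k n) = 2 *\<^sub>R (x - mid)"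
      by (simp add: mid_def algebra_simps scaleR_2)
    then have "norm ((x - k m) + (x - k n)) = 2 * norm (x - mid)" by simp
    then have h1: "(norm ((x - k m) + (x - k n)))\<^sup>2 \<ge> 4 * d\<^sup>2"
      using md d0 by (simp add: power_mult_distrib power_mono)
    have "(norm (k n - k m))\<^sup>2 = 2 * (norm (x - k m))\<^sup>2 + 2 * (norm (x - k n))\<^sup>2
         - (norm ((x - k m) + (x - k n)))\<^sup>2"
      using parallelogram[of "x - k m" "x - k n"] by (simp add: algebra_simps)
    also have "\<dots> \<le> 2 * (d + e m)\<^sup>2 + 2 * (d + e n)\<^sup>2 - 4 * d\<^sup>2"
    proof -
      have "(norm (x - k m))\<^sup>2 \<le> (d + e m)\<^sup>2"
        using kd[of m] by (intro power_mono) (auto simp: e_def)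
      moreover have "(norm (x - k n))\<^sup>2 \<le> (d + e n)\<^sup>2"
        using kd[of n] by (intro power_mono) (auto simp: e_def)
      ultimately show ?thesis using h1 by linarith
    qed
    also have "\<dots> = 4 * d * (e n + e m) + 2 * (e n)\<^sup>2 + 2 * (e m)\<^sup>2"
      by (simp add: power2_eq_square algebra_simps)
    also have "\<dots> \<le> (4 * d + 2) * (e n + e m)"
    proof -
      have "(e n)\<^sup>2 \<le> e n" "(e m)\<^sup>2 \<le> e m"
        using e0 by (auto simp: power2_eq_square intro: mult_le_one[of "e _" "e _", THEN order_trans])
      then show ?thesis by (simp add: algebra_simps)
    qed
    finally show ?thesis .
  qed
  have "Cauchy k"
  proof (rule metric_CauchyI)
    fix eps :: real assume eps: "0 < eps"
    obtain N :: nat where N: "2 * (4 * d + 2) / eps\<^sup>2 < real N"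
      using reals_Archimedean2 by blast
    have "dist (k m) (k n) < eps" if "m \<ge> N" "n \<ge> N" for m n
    proof -
      have em: "e m \<le> inverse (real (Suc N))" "e n \<le> inverse (real (Suc N))"
        using that by (auto simp: e_def intro!: le_imp_inverse_le)
      have "(norm (k m - k n))\<^sup>2 \<le> (4 * d + 2) * (e m + e n)" by (rule key)
      also have "\<dots> \<le> (4 * d + 2) * (2 * inverse (real (Suc N)))"
        using em d0 by (intro mult_left_mono) auto
      also have "\<dots> < eps\<^sup>2"
      proof -
        have "2 * (4 * d + 2) < eps\<^sup>2 * real (Suc N)"
          using N eps by (simp add: field_simps) (smt (verit) zero_less_power)
        then show ?thesis by (simp add: field_simps)
      qed
      finally have "(norm (k m - k n))\<^sup>2 < eps\<^sup>2" .
      then show ?thesis using eps by (simp add: dist_norm power_less_imp_less_base)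
    qed
    then show "\<exists>M. \<forall>m\<ge>M. \<forall>n\<ge>M. dist (k m) (k n) < eps" by blast
  qed
  then obtain p where kp: "k \<longlonglongrightarrow> p" using Cauchy_convergent_iff convergent_def by blast
  have pK: "p \<in> K" using closed_sequentially[OF cl kK kp] .
  have "norm (x - p) \<le> d"
  proof (rule LIMSEQ_le)
    show "(\<lambda>n. norm (x - k n)) \<longlonglongrightarrow> norm (x - p)"
      by (intro tendsto_intros kp)
    show "(\<lambda>n. d + inverse (real (Suc n))) \<longlonglongrightarrow> d" by (rule LIMSEQ_inverse_real_of_nat_add)
    show "\<exists>N. \<forall>n\<ge>N. norm (x - k n) \<le> d + inverse (real (Suc n))"
      using kd less_imp_le by blast
  qed
  with dle[OF pK] have nd: "norm (x - p) = d" by simp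
  show ?thesis
  proof (intro bexI[OF _ pK] ballI)
    fix z assume zK: "z \<in> K"
    define w where "w = x - p"
    show "cinner z (x - p) = 0"
    proof (cases "z = 0")
      case True then show ?thesis by simp
    next
      case False
      define a where "a = cinner z w"
      define r where "r = norm z"
      have r0: "r > 0" using False by (simp add: r_def)
      define t where "t = a / complex_of_real (r\<^sup>2)"
      have "p + scaleC t z \<in> K" using cs pK zK unfolding csub_def by blast
      then have "d \<le> norm (x - (p + scaleC t z))" by (rule dle)
      then have "d\<^sup>2 \<le> (norm (w - scaleC t z))\<^sup>2"
        using d0 by (simp add: w_def algebra_simps power_mono)
      also have "\<dots> = (norm w)\<^sup>2 - 2 * Re (cinner w (scaleC t z)) + (norm (scaleC t z))\<^sup>2"
        by (rule norm_diff_sq)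
      also have "Re (cinner w (scaleC t z)) = (cmod a)\<^sup>2 / r\<^sup>2"
      proof -
        have "cinner w (scaleC t z) = t * cnj a"
          by (simp add: cinner_scaleC_right a_def cinner_conj[of w z])
        also have "\<dots> = complex_of_real ((cmod a)\<^sup>2 / r\<^sup>2)"
          using complex_norm_square[of a] by (simp add: t_def)
        finally show ?thesis by simp
      qed
      also have "(norm (scaleC t z))\<^sup>2 = (cmod a)\<^sup>2 / r\<^sup>2"
        using r0 by (simp add: norm_scaleC t_def norm_divide power_mult_distrib r_def[symmetric]
            power2_eq_square norm_mult abs_mult del: of_real_mult)
      finally have "d\<^sup>2 \<le> (norm w)\<^sup>2 - (cmod a)\<^sup>2 / r\<^sup>2" by simp
      then have "(cmod a)\<^sup>2 / r\<^sup>2 \<le> 0" using nd by (simp add: w_def)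
      then have "(cmod a)\<^sup>2 \<le> 0" using r0 by (simp add: divide_le_0_iff)
      then have "a = 0" by simp
      then show ?thesis by (simp add: a_def w_def)
    qed
  qed
qed


definition proj :: "'a::chilbert set \<Rightarrow> 'a \<Rightarrow> 'a" where
  "proj K x = (SOME p. p \<in> K \<and> (\<forall>k\<in>K. cinner k (x - p) = 0))"

lemma proj_char:
  assumes "closed K" "csub K"
  shows "proj K x \<in> K \<and> (\<forall>k\<in>K. cinner k (x - proj K x) = 0)"
  unfolding proj_def by (rule someI_ex) (use proj_exists[OF assms, of x] in blast)

lemma proj_in: assumes "closed K" "csub K" shows "proj K x \<in> K"
  using proj_char[OF assms] by (rule conjunct1)

lemma proj_orth: assumes "closed K" "csub K" "k \<in> K" shows "cinner k (x - proj K x) = 0"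
proof -
  have "\<forall>k\<in>K. cinner k (x - proj K x) = 0" using proj_char[OF assms(1,2)] by (rule conjunct2)
  then show ?thesis using assms(3) by (rule bspec)
qed

lemma proj_unique:
  assumes K: "closed K" "csub K" and p: "p \<in> K" "\<forall>k\<in>K. cinner k (x - p) = 0"
  shows "proj K x = p"
proof -
  let ?q = "proj K x"
  have d: "p - ?q \<in> K" using csub_diff[OF K(2) p(1) proj_in[OF K]] .
  have "cinner (p - ?q) (x - p) = 0" using p d by blast
  moreover have "cinner (p - ?q) (x - ?q) = 0" using proj_orth[OF K d] .
  ultimately have "cinner (p - ?q) ((x - ?q) - (x - p)) = 0"
    by (simp add: cinner_diff_right)
  then have "cinner (p - ?q) (p - ?q) = 0" by simp
  then show ?thesis by simp
qed

lemma proj_id: assumes "closed K" "csub K" "x \<in> K" shows "proj K x = x"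
  using assms by (intro proj_unique) auto

lemma proj_zero: assumes "closed K" "csub K" "\<forall>k\<in>K. cinner k x = 0" shows "proj K x = 0"
  using assms by (intro proj_unique) (auto simp: csub_def)

lemma proj_add: assumes K: "closed K" "csub K" shows "proj K (x + y) = proj K x + proj K y"
proof (rule proj_unique[OF K])
  show "proj K x + proj K y \<in> K" using proj_in[OF K] K(2) unfolding csub_def by blast
  show "\<forall>k\<in>K. cinner k (x + y - (proj K x + proj K y)) = 0"
  proof
    fix k assume k: "k \<in> K"
    have e: "x + y - (proj K x + proj K y) = (x - proj K x) + (y - proj K y)" by (simp add: algebra_simps)
    have "cinner k (x + y - (proj K x + proj K y)) = cinner k (x - proj K x) + cinner k (y - proj K y)"
      by (simp only: e cinner_add_right)
    then show "cinner k (x + y - (proj K x + proj K y)) = 0"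
      using proj_orth[OF K k, of x] proj_orth[OF K k, of y] by simp
  qed
qed

lemma proj_scaleC: assumes K: "closed K" "csub K" shows "proj K (scaleC c x) = scaleC c (proj K x)"
proof (rule proj_unique[OF K])
  show "scaleC c (proj K x) \<in> K" using proj_in[OF K] K(2) unfolding csub_def by blast
  show "\<forall>k\<in>K. cinner k (scaleC c x - scaleC c (proj K x)) = 0"
  proof
    fix k assume k: "k \<in> K"
    have e: "scaleC c x - scaleC c (proj K x) = scaleC c (x - proj K x)" by (simp add: scaleC_diff_right)
    have "cinner k (scaleC c x - scaleC c (proj K x)) = c * cinner k (x - proj K x)"
      by (simp only: e cinner_scaleC_right)
    then show "cinner k (scaleC c x - scaleC c (proj K x)) = 0"
      using proj_orth[OF K k, of x] by simp
  qed
qed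

lemma proj_norm: assumes "closed K" "csub K" shows "norm (proj K x) \<le> norm x"
proof -
  have "cinner (proj K x) (x - proj K x) = 0" using proj_orth[OF assms proj_in[OF assms]] .
  then have "(norm x)\<^sup>2 = (norm (proj K x))\<^sup>2 + (norm (x - proj K x))\<^sup>2"
    using norm_add_sq[of "proj K x" "x - proj K x"] by simp
  then have "(norm (proj K x))\<^sup>2 \<le> (norm x)\<^sup>2" by simp
  then show ?thesis by (rule power2_le_imp_le) simp
qed

lemma proj_sa: assumes "closed K" "csub K"
  shows "cinner (proj K x) y = cinner x (proj K y)"
proof -
  have a: "cinner (proj K x) (y - proj K y) = 0" using proj_orth[OF assms proj_in[OF assms]] .
  have b: "cinner (proj K y) (x - proj K x) = 0" using proj_orth[OF assms proj_in[OF assms]] .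
  then have b': "cinner (x - proj K x) (proj K y) = 0" by (subst cinner_conj) simp
  from a have "cinner (proj K x) y = cinner (proj K x) (proj K y)" by (simp add: cinner_diff_right)
  also from b' have "\<dots> = cinner x (proj K y)" by (simp add: cinner_diff_left)
  finally show ?thesis .
qed

lemma proj_idem: assumes "closed K" "csub K" shows "proj K (proj K x) = proj K x"
  using proj_id[OF assms proj_in[OF assms]] .

lemma bclI:
  assumes "bounded_linear T" "\<And>c x. T (scaleC c x) = scaleC c (T x)"
  shows "bounded_clinear_op T"
proof -
  obtain K where "\<forall>x. norm (T x) \<le> norm x * K" using bounded_linear.bounded[OF assms(1)] by blast
  moreover have "\<forall>x y. T (x + y) = T x + T y"
    using linear_add[OF bounded_linear.linear[OF assms(1)]] by blast
  ultimately show ?thesis unfolding bounded_clinear_op_def using assms(2) by blast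
qed

lemma bcl_bl: assumes "bounded_clinear_op T" shows "bounded_linear T"
proof -
  from assms obtain K where a: "\<And>x y. T (x + y) = T x + T y"
    and s: "\<And>c x. T (scaleC c x) = scaleC c (T x)" and b: "\<And>x. norm (T x) \<le> norm x * K"
    unfolding bounded_clinear_op_def by blast
  show ?thesis
  proof (rule bounded_linear_intro[OF a _ b])
    show "T (r *\<^sub>R x) = r *\<^sub>R T x" for r x using s[of "of_real r" x] by (simp add: scaleC_of_real)
  qed
qed

lemma bcl_scaleC: "bounded_clinear_op T \<Longrightarrow> T (scaleC c x) = scaleC c (T x)"
  unfolding bounded_clinear_op_def by blast

lemma bcl_add: "bounded_clinear_op T \<Longrightarrow> T (x + y) = T x + T y"
  unfolding bounded_clinear_op_def by blast

lemma bcl_diff: "bounded_clinear_op T \<Longrightarrow> T (x - y) = T x - T y"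
  using bcl_bl linear_diff bounded_linear.linear by blast

lemma bcl_minus: "bounded_clinear_op T \<Longrightarrow> T (- x) = - T x"
  using bcl_bl linear_neg bounded_linear.linear by blast

lemma bcl_zero: "bounded_clinear_op T \<Longrightarrow> T 0 = 0"
  using bcl_bl linear_0 bounded_linear.linear by blast

lemma bcl_scaleR: "bounded_clinear_op T \<Longrightarrow> T (r *\<^sub>R x) = r *\<^sub>R T x"
  by (metis bcl_scaleC scaleC_of_real)

lemma bcl_pos_bound: "bounded_clinear_op T \<Longrightarrow> \<exists>K>0. \<forall>x. norm (T x) \<le> norm x * K"
  using bcl_bl bounded_linear.pos_bounded by blast

lemma bcl_comp: "bounded_clinear_op A \<Longrightarrow> bounded_clinear_op B \<Longrightarrow> bounded_clinear_op (A \<circ> B)"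
  by (rule bclI) (auto simp: comp_def bcl_scaleC intro: bounded_linear_compose bcl_bl)

lemma bcl_id: "bounded_clinear_op id"
  by (rule bclI) (auto simp: bounded_linear_ident[unfolded id_def[symmetric]])

lemma bcl_proj: assumes "closed K" "csub K" shows "bounded_clinear_op (proj K)"
  unfolding bounded_clinear_op_def
  using proj_add[OF assms] proj_scaleC[OF assms] proj_norm[OF assms] by (metis mult.right_neutral)

section \<open>Riesz representation and adjoints\<close>

lemma riesz:
  fixes f :: "'a::chilbert \<Rightarrow> complex"
  assumes add: "\<And>x y. f (x + y) = f x + f y" and sc: "\<And>c x. f (scaleC c x) = c * f x"
    and bd: "\<And>x. cmod (f x) \<le> norm x * B"
  shows "\<exists>w. \<forall>x. f x = cinner w x"
proof -
  have bl: "bounded_linear f"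
  proof (rule bounded_linear_intro[OF add _ bd])
    show "f (r *\<^sub>R x) = r *\<^sub>R f x" for r x
      using sc[of "of_real r" x] by (simp add: scaleC_of_real scaleR_conv_of_real)
  qed
  have fdiff: "f (x - y) = f x - f y" for x y
    using linear_diff[OF bounded_linear.linear[OF bl]] .
  have f0: "f 0 = 0" using linear_0[OF bounded_linear.linear[OF bl]] .
  define N where "N = {x. f x = 0}"
  have clN: "closed N" unfolding N_def
    by (rule closed_Collect_eq) (auto intro: linear_continuous_on bl)
  have csN: "csub N" unfolding csub_def N_def by (auto simp: add sc f0)
  show ?thesis
  proof (cases "\<forall>x. f x = 0")
    case True then show ?thesis by (intro exI[of _ 0]) simp
  next
    case False
    then obtain x0 where x0: "f x0 \<noteq> 0" by blast
    define z where "z = x0 - proj N x0"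
    have "f (proj N x0) = 0" using proj_in[OF clN csN] by (simp add: N_def)
    then have fz: "f z \<noteq> 0" using x0 by (simp add: z_def fdiff)
    then have z0: "z \<noteq> 0" using f0 by auto
    have zorth: "\<forall>k\<in>N. cinner k z = 0" using proj_orth[OF clN csN] by (simp add: z_def)
    define w where "w = scaleC (cnj (f z / cinner z z)) z"
    have "f y = cinner w y" for y
    proof -
      define v where "v = scaleC (f y) z - scaleC (f z) y"
      have "f v = 0" by (simp add: v_def fdiff sc)
      then have "cinner v z = 0" using zorth by (simp add: N_def)
      then have "cinner z v = 0" by (subst cinner_conj) simp
      then have "f y * cinner z z = f z * cinner z y"
        by (simp add: v_def cinner_diff_right cinner_scaleC_right)
      moreover have "cinner z z \<noteq> 0" using z0 by simp
      ultimately show ?thesis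
        by (simp add: w_def cinner_scaleC_left field_simps)
    qed
    then show ?thesis by blast
  qed
qed

lemma adj_unique:
  assumes "\<forall>x y. cinner (T x) y = cinner x (S y)"
  shows "adj T = S"
  unfolding adj_def
proof (rule the_equality)
  show "\<forall>x y. cinner (T x) y = cinner x (S y)" by fact
  fix S' assume "\<forall>x y. cinner (T x) y = cinner x (S' y)"
  note h = this
  show "S' = S"
  proof (rule ext, rule cinner_ext_right)
    fix y z show "cinner z (S' y) = cinner z (S y)" using h assms by simp
  qed
qed

lemma adj_exists:
  assumes T: "bounded_clinear_op T"
  shows "\<exists>S. \<forall>x y. cinner (T x) y = cinner x (S y)"
proof -
  obtain K where K: "\<And>x. norm (T x) \<le> norm x * K"
    using T unfolding bounded_clinear_op_def by blast
  have "\<exists>w. \<forall>x. cinner y (T x) = cinner w x" for y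
  proof (rule riesz)
    show "cinner y (T (a + b)) = cinner y (T a) + cinner y (T b)" for a b
      by (simp add: bcl_add[OF T] cinner_add_right)
    show "cinner y (T (scaleC c a)) = c * cinner y (T a)" for c a
      by (simp add: bcl_scaleC[OF T] cinner_scaleC_right)
    show "cmod (cinner y (T a)) \<le> norm a * (norm y * K)" for a
    proof -
      have "cmod (cinner y (T a)) \<le> norm y * norm (T a)" by (rule Cauchy_Schwarz)
      also have "\<dots> \<le> norm y * (norm a * K)" by (intro mult_left_mono K) simp
      finally show ?thesis by (simp add: algebra_simps)
    qed
  qed
  then obtain S where S: "\<And>y x. cinner y (T x) = cinner (S y) x" by metis
  have "cinner (T x) y = cinner x (S y)" for x y
  proof -
    have "cinner (T x) y = cnj (cinner y (T x))" by (rule cinner_conj)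
    also have "\<dots> = cnj (cinner (S y) x)" by (simp only: S)
    also have "\<dots> = cinner x (S y)" by (rule cinner_conj[symmetric])
    finally show ?thesis .
  qed
  then show ?thesis by blast
qed

lemma adj_prop: assumes "bounded_clinear_op T" shows "cinner (T x) y = cinner x (adj T y)"
proof -
  obtain S where S: "\<forall>x y. cinner (T x) y = cinner x (S y)" using adj_exists[OF assms] by blast
  then have "adj T = S" by (rule adj_unique)
  then show ?thesis using S by simp
qed

lemma adj_prop2: assumes "bounded_clinear_op T" shows "cinner (adj T x) y = cinner x (T y)"
proof -
  have "cinner (adj T x) y = cnj (cinner y (adj T x))" by (rule cinner_conj)
  also have "\<dots> = cnj (cinner (T y) x)" by (simp only: adj_prop[OF assms])
  also have "\<dots> = cinner x (T y)" by (rule cinner_conj[symmetric])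
  finally show ?thesis .
qed

lemma adj_bcl:
  assumes T: "bounded_clinear_op T"
  shows "bounded_clinear_op (adj T)"
proof -
  let ?S = "adj T"
  obtain K where K0: "K > 0" and K: "\<And>x. norm (T x) \<le> norm x * K"
    using bcl_pos_bound[OF T] by blast
  have a: "?S (x + y) = ?S x + ?S y" for x y
    by (rule cinner_ext_right) (simp add: adj_prop[OF T, symmetric] cinner_add_right)
  have s: "?S (scaleC c x) = scaleC c (?S x)" for c x
    by (rule cinner_ext_right) (simp add: adj_prop[OF T, symmetric] cinner_scaleC_right)
  have b: "norm (?S y) \<le> norm y * K" for y
  proof (cases "?S y = 0")
    case True then show ?thesis using K0 by simp
  next
    case False
    have "(norm (?S y))\<^sup>2 = Re (cinner (?S y) (?S y))" by (simp add: cinner_self_norm del: of_real_power)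
    also have "\<dots> = Re (cinner (T (?S y)) y)" by (simp add: adj_prop[OF T])
    also have "\<dots> \<le> cmod (cinner (T (?S y)) y)" by (rule complex_Re_le_cmod)
    also have "\<dots> \<le> norm (T (?S y)) * norm y" by (rule Cauchy_Schwarz)
    also have "\<dots> \<le> norm (?S y) * K * norm y" by (intro mult_right_mono K) simp
    finally have "norm (?S y) * norm (?S y) \<le> norm (?S y) * (norm y * K)"
      by (simp add: power2_eq_square algebra_simps)
    then show ?thesis using False by simp
  qed
  show ?thesis unfolding bounded_clinear_op_def using a s b by blast
qed

lemma adj_adj: "bounded_clinear_op T \<Longrightarrow> adj (adj T) = T"
  by (rule adj_unique) (simp add: adj_prop2)


section \<open>Coefficients of the binomial series for sqrt(1 - x)\<close>

definition coef :: "nat \<Rightarrow> real" where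
  "coef n = (-1) ^ n * ((1/2::real) gchoose n)"

lemma gch_rec: "((a::real) gchoose Suc k) = (a gchoose k) * (a - of_nat k) / of_nat (Suc k)"
proof -
  have "(a gchoose Suc k) * fact (Suc k) = (\<Prod>i = 0..<Suc k. a - of_nat i)"
    by (rule gbinomial_mult_fact')
  also have "\<dots> = (\<Prod>i = 0..<k. a - of_nat i) * (a - of_nat k)"
    by simp
  also have "(\<Prod>i = 0..<k. a - of_nat i) = (a gchoose k) * fact k"
    by (rule gbinomial_mult_fact'[symmetric])
  finally have "(a gchoose Suc k) * fact (Suc k) = (a gchoose k) * fact k * (a - of_nat k)" .
  then have "((a gchoose Suc k) * of_nat (Suc k)) * fact k = ((a gchoose k) * (a - of_nat k)) * fact k"
    by (simp only: fact_Suc) (simp add: algebra_simps)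
  then have "(a gchoose Suc k) * of_nat (Suc k) = (a gchoose k) * (a - of_nat k)"
    by (rule mult_right_cancel[THEN iffD1, rotated]) simp
  then show ?thesis
    by (simp add: eq_divide_eq del: of_nat_Suc)
qed

lemma coef_0[simp]: "coef 0 = 1" by (simp add: coef_def)

lemma coef_Suc: "coef (Suc n) = coef n * ((real n - 1/2) / real (Suc n))"
  by (simp add: coef_def gch_rec field_simps del: of_nat_Suc)

lemma coef_neg: "coef (Suc n) < 0"
proof (induction n)
  case 0 then show ?case by (simp add: coef_def)
next
  case (Suc n)
  have "(real (Suc n) - 1/2) / real (Suc (Suc n)) > 0" by simp
  then show ?case using Suc coef_Suc[of "Suc n"] by (metis mult_neg_pos)
qed

lemma coef_partial: "(\<Sum>k\<le>m. coef k) = (-1) ^ m * ((-1/2::real) gchoose m)"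
proof -
  have "(\<Sum>k\<le>m. coef k) = (\<Sum>k\<le>m. ((1/2::real) gchoose k) * (- 1) ^ k)"
    by (simp add: coef_def mult.commute)
  also have "\<dots> = (-1) ^ m * ((1/2 - 1::real) gchoose m)" by (rule gbinomial_sum_lower_neg)
  finally show ?thesis by simp
qed

lemma coef_partial_nonneg: "(\<Sum>k\<le>m. coef k) \<ge> 0"
proof -
  have "(-1) ^ m * ((-1/2::real) gchoose m) > 0"
  proof (induction m)
    case 0 then show ?case by simp
  next
    case (Suc m)
    have "(-1) ^ Suc m * ((-1/2::real) gchoose Suc m)
        = ((-1) ^ m * ((-1/2::real) gchoose m)) * ((real m + 1/2) / real (Suc m))"
      by (simp add: gch_rec field_simps del: of_nat_Suc)
    also have "\<dots> > 0" using Suc by (simp del: of_nat_Suc)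
    finally show ?case .
  qed
  then show ?thesis by (simp add: coef_partial)
qed

lemma abs_coef_partial: "(\<Sum>k\<le>m. \<bar>coef k\<bar>) + (\<Sum>k\<le>m. coef k) = 2"
proof (induction m)
  case 0 then show ?case by simp
next
  case (Suc m)
  have "\<bar>coef (Suc m)\<bar> = - coef (Suc m)" using coef_neg[of m] by simp
  then show ?case using Suc by simp
qed

lemma abs_coef_partial_le: "(\<Sum>k\<le>m. \<bar>coef k\<bar>) \<le> 2"
  using abs_coef_partial[of m] coef_partial_nonneg[of m] by linarith

lemma summable_abs_coef: "summable (\<lambda>n. \<bar>coef n\<bar>)"
proof (rule summableI_nonneg_bounded)
  show "0 \<le> \<bar>coef n\<bar>" for n by simp
  show "(\<Sum>i<n. \<bar>coef i\<bar>) \<le> 2" for n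
  proof -
    have "(\<Sum>i<n. \<bar>coef i\<bar>) \<le> (\<Sum>i\<le>n. \<bar>coef i\<bar>)"
      by (intro sum_mono2) auto
    then show ?thesis using abs_coef_partial_le[of n] by linarith
  qed
qed

lemma coef_conv:
  "(\<Sum>i\<le>k. coef i * coef (k - i)) = (if k = 0 then 1 else if k = 1 then -1 else 0)"
proof -
  have "(\<Sum>i\<le>k. coef i * coef (k - i)) = (-1) ^ k * (\<Sum>i\<in>{0..k}. ((1/2::real) gchoose i) * ((1/2) gchoose (k - i)))"
  proof -
    have "coef i * coef (k - i) = (-1) ^ k * (((1/2::real) gchoose i) * ((1/2) gchoose (k - i)))"
      if "i \<le> k" for i
    proof -
      have "(-1::real) ^ i * (-1) ^ (k - i) = (-1) ^ k"
        using that by (simp add: power_add[symmetric])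
      then show ?thesis by (simp add: coef_def algebra_simps)
    qed
    then show ?thesis by (simp add: sum_distrib_left atLeast0AtMost)
  qed
  also have "(\<Sum>i\<in>{0..k}. ((1/2::real) gchoose i) * ((1/2) gchoose (k - i))) = (1/2 + 1/2::real) gchoose k"
    by (rule gbinomial_Vandermonde)
  also have "(1/2 + 1/2::real) gchoose k = of_nat (1 choose k)"
    using binomial_gbinomial[of 1 k, where 'a=real] by simp
  finally show ?thesis
    by (cases k) (auto simp: binomial_eq_0)
qed


lemma bl_sum:
  assumes "bounded_linear f"
  shows "f (sum g A) = (\<Sum>x\<in>A. f (g x))"
proof (cases "finite A")
  case True then show ?thesis
    by (induction A rule: finite_induct)
       (simp_all add: linear_0[OF bounded_linear.linear[OF assms]] linear_add[OF bounded_linear.linear[OF assms]])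
next
  case False then show ?thesis by (simp add: linear_0[OF bounded_linear.linear[OF assms]])
qed

definition SC :: real where "SC = (\<Sum>n. \<bar>coef n\<bar>)"

lemma SC_nonneg: "0 \<le> SC"
  unfolding SC_def by (rule suminf_nonneg[OF summable_abs_coef]) simp

lemma sum_abs_coef_le_SC: "(\<Sum>n\<in>A. \<bar>coef n\<bar>) \<le> SC" if "finite A"
  unfolding SC_def by (rule sum_le_suminf[OF summable_abs_coef that]) simp

locale sqrt_setup =
  fixes X :: "'a::chilbert \<Rightarrow> 'a"
  assumes bclX: "bounded_clinear_op X"
    and saX: "\<And>x y. cinner (X x) y = cinner x (X y)"
    and contr: "\<And>v. norm (X v) \<le> norm v"
begin

lemma Xp_bcl: "bounded_clinear_op (X ^^ n)"
proof (induction n)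
  case 0 then show ?case using bcl_id by (simp add: id_def)
next
  case (Suc n)
  have "bounded_clinear_op (X \<circ> X ^^ n)" by (rule bcl_comp[OF bclX Suc.IH])
  then show ?case by (simp add: comp_def)
qed

lemma Xp_bl: "bounded_linear (X ^^ n)"
  using Xp_bcl bcl_bl by blast

lemma Xp_norm: "norm ((X ^^ n) v) \<le> norm v"
  by (induction n) (auto intro: order_trans[OF contr])

lemma Xp_sa: "cinner ((X ^^ n) x) y = cinner x ((X ^^ n) y)"
  by (induction n arbitrary: x y) (simp_all add: saX funpow_swap1)

lemma Xp_add: "(X ^^ (n + m)) v = (X ^^ n) ((X ^^ m) v)"
  by (simp add: funpow_add)

lemma Xp_comm:
  assumes "\<And>v. B (X v) = X (B v)"
  shows "B ((X ^^ n) v) = (X ^^ n) (B v)"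
  by (induction n) (simp_all add: assms)

definition trm :: "'a \<Rightarrow> nat \<Rightarrow> 'a" where
  "trm v n = coef n *\<^sub>R (X ^^ n) v"

lemma norm_trm: "norm (trm v n) \<le> \<bar>coef n\<bar> * norm v"
  unfolding trm_def by (simp add: mult_left_mono Xp_norm)

lemma summable_norm_trm: "summable (\<lambda>n. norm (trm v n))"
  by (rule summable_comparison_test[where g="\<lambda>n. \<bar>coef n\<bar> * norm v"])
     (auto intro: norm_trm summable_mult2 summable_abs_coef)

lemma summable_trm: "summable (trm v)"
  using summable_norm_cancel[OF summable_norm_trm] .

definition R :: "'a \<Rightarrow> 'a" where
  "R v = suminf (trm v)"

lemma R_bound: "norm (R v) \<le> SC * norm v"
proof -
  have "norm (R v) \<le> (\<Sum>n. norm (trm v n))"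
    unfolding R_def by (rule summable_norm[OF summable_norm_trm])
  also have "\<dots> \<le> (\<Sum>n. \<bar>coef n\<bar> * norm v)"
    by (intro suminf_le norm_trm summable_norm_trm summable_mult2 summable_abs_coef)
  also have "\<dots> = SC * norm v"
    unfolding SC_def by (rule suminf_mult2[symmetric, OF summable_abs_coef])
  finally show ?thesis .
qed

lemma R_comm:
  assumes bl: "bounded_linear B" and c: "\<And>v. B (X v) = X (B v)"
  shows "B (R v) = R (B v)"
proof -
  have "B (R v) = (\<Sum>n. B (trm v n))"
    unfolding R_def by (rule bounded_linear.suminf[OF bl summable_trm])
  also have "\<dots> = (\<Sum>n. trm (B v) n)"
    unfolding trm_def
    by (rule suminf_cong) (simp add: linear_scale[OF bounded_linear.linear[OF bl]] Xp_comm[where B=B, OF c])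
  finally show ?thesis by (simp add: R_def)
qed

lemma R_add: "R (v + w) = R v + R w"
proof -
  have "trm (v + w) = (\<lambda>n. trm v n + trm w n)"
    unfolding trm_def by (rule ext) (simp add: linear_add[OF bounded_linear.linear[OF Xp_bl]] scaleR_add_right)
  then show ?thesis
    unfolding R_def by (simp add: suminf_add[OF summable_trm summable_trm])
qed

lemma bl_scaleC: "bounded_linear (scaleC c :: 'a \<Rightarrow> 'a)"
proof (rule bounded_linear_intro[where K="cmod c"])
  show "scaleC c (x + y) = scaleC c x + scaleC c y" for x y :: 'a by (rule scaleC_add_right)
  show "scaleC c (r *\<^sub>R x) = r *\<^sub>R scaleC c x" for r and x :: 'a
    by (simp add: scaleC_scaleR scaleR_scaleC)
  show "norm (scaleC c x) \<le> norm x * cmod c" for x :: 'a by (simp add: norm_scaleC)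
qed

lemma R_scaleC: "R (scaleC c v) = scaleC c (R v)"
  using R_comm[OF bl_scaleC, of c] bcl_scaleC[OF bclX] by metis

lemma R_bcl: "bounded_clinear_op R"
  unfolding bounded_clinear_op_def using R_add R_scaleC R_bound
  by (metis mult.commute)

lemma R_bl: "bounded_linear R"
  using R_bcl bcl_bl by blast

lemma R_sa: "cinner (R x) y = cinner x (R y)"
proof -
  have "cinner (R x) y = (\<Sum>n. cinner (trm x n) y)"
    unfolding R_def by (rule bounded_linear.suminf[OF bounded_linear_cinner_left summable_trm])
  also have "\<dots> = (\<Sum>n. cinner x (trm y n))"
    unfolding trm_def by (rule suminf_cong) (simp add: cinner_scaleR_left cinner_scaleR_right Xp_sa)
  also have "(\<Sum>n. cinner x (trm y n)) = cinner x (R y)"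
    unfolding R_def by (rule bounded_linear.suminf[OF bounded_linear_cinner_right summable_trm, symmetric])
  finally show ?thesis .
qed

end


lemma sum_first_two:
  fixes m :: nat and f :: "nat \<Rightarrow> 'b::comm_monoid_add"
  assumes "\<And>k. k \<ge> 2 \<Longrightarrow> f k = (0::'b::comm_monoid_add)"
  shows "(\<Sum>k<m + 2. f k) = f 0 + f 1"
proof (induction m)
  case 0 then show ?case by (simp add: numeral_2_eq_2)
next
  case (Suc m)
  have "(\<Sum>k<Suc m + 2. f k) = (\<Sum>k<m + 2. f k) + f (m + 2)" by simp
  then show ?case using Suc assms[of "m+2"] by simp
qed

lemma abs_coef_tail:
  "(\<lambda>N. \<Sum>(i,j)\<in>{..<N}\<times>{..<N} - {(i,j). i + j < N}. \<bar>coef i\<bar> * \<bar>coef j\<bar>) \<longlonglongrightarrow> 0"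
proof -
  let ?h = "\<lambda>(i,j). \<bar>coef i\<bar> * \<bar>coef j\<bar>"
  have sub: "{(i,j). i + j < N} \<subseteq> {..<N}\<times>{..<N}" for N :: nat by auto
  have fin: "finite ({..<N}\<times>{..<N})" for N :: nat by simp
  have eq: "(\<Sum>x\<in>{..<N}\<times>{..<N} - {(i,j). i + j < N}. ?h x)
      = (\<Sum>i<N. \<bar>coef i\<bar>) * (\<Sum>i<N. \<bar>coef i\<bar>) - (\<Sum>k<N. \<Sum>i\<le>k. \<bar>coef i\<bar> * \<bar>coef (k - i)\<bar>)" for N
  proof -
    have "(\<Sum>x\<in>{..<N}\<times>{..<N}. ?h x) = (\<Sum>x\<in>{..<N}\<times>{..<N} - {(i,j). i + j < N}. ?h x) + (\<Sum>x\<in>{(i,j). i + j < N}. ?h x)"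
      by (rule sum.subset_diff[OF sub fin])
    moreover have "(\<Sum>x\<in>{..<N}\<times>{..<N}. ?h x) = (\<Sum>i<N. \<bar>coef i\<bar>) * (\<Sum>i<N. \<bar>coef i\<bar>)"
      by (simp add: sum_product sum.cartesian_product)
    moreover have "(\<Sum>x\<in>{(i,j). i + j < N}. ?h x) = (\<Sum>k<N. \<Sum>i\<le>k. \<bar>coef i\<bar> * \<bar>coef (k - i)\<bar>)"
      by (rule sum.triangle_reindex)
    ultimately show ?thesis by simp
  qed
  have l1: "(\<lambda>N. (\<Sum>i<N. \<bar>coef i\<bar>) * (\<Sum>i<N. \<bar>coef i\<bar>)) \<longlonglongrightarrow> SC * SC"
    unfolding SC_def by (intro tendsto_mult summable_LIMSEQ summable_abs_coef)
  have "(\<lambda>k. \<Sum>i\<le>k. \<bar>coef i\<bar> * \<bar>coef (k - i)\<bar>) sums (SC * SC)"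
    unfolding SC_def by (rule Cauchy_product_sums) (simp_all add: summable_abs_coef)
  then have l2: "(\<lambda>N. \<Sum>k<N. \<Sum>i\<le>k. \<bar>coef i\<bar> * \<bar>coef (k - i)\<bar>) \<longlonglongrightarrow> SC * SC"
    by (simp add: sums_def)
  have "(\<lambda>N. (\<Sum>i<N. \<bar>coef i\<bar>) * (\<Sum>i<N. \<bar>coef i\<bar>) - (\<Sum>k<N. \<Sum>i\<le>k. \<bar>coef i\<bar> * \<bar>coef (k - i)\<bar>)) \<longlonglongrightarrow> SC * SC - SC * SC"
    by (rule tendsto_diff[OF l1 l2])
  then show ?thesis by (simp add: eq)
qed

context sqrt_setup begin

definition p :: "nat \<Rightarrow> 'a \<Rightarrow> 'a" where
  "p N w = (\<Sum>n<N. trm w n)"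

lemma trm_diff: "trm (a - b) n = trm a n - trm b n"
  unfolding trm_def by (simp add: linear_diff[OF bounded_linear.linear[OF Xp_bl]] scaleR_diff_right)

lemma p_diff: "p N (a - b) = p N a - p N b"
  unfolding p_def by (simp add: trm_diff sum_subtractf)

lemma p_bound: "norm (p N w) \<le> SC * norm w"
proof -
  have "norm (p N w) \<le> (\<Sum>n<N. norm (trm w n))" unfolding p_def by (rule norm_sum)
  also have "\<dots> \<le> (\<Sum>n<N. \<bar>coef n\<bar> * norm w)" by (intro sum_mono norm_trm)
  also have "\<dots> = (\<Sum>n<N. \<bar>coef n\<bar>) * norm w" by (simp add: sum_distrib_right)
  also have "\<dots> \<le> SC * norm w" by (intro mult_right_mono sum_abs_coef_le_SC) simp_all
  finally show ?thesis .
qed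

lemma p_lim: "(\<lambda>N. p N w) \<longlonglongrightarrow> R w"
  unfolding p_def R_def by (rule summable_LIMSEQ[OF summable_trm])

lemma claim1: "(\<lambda>N. p N (p N v)) \<longlonglongrightarrow> R (R v)"
proof (rule LIM_zero_cancel, rule Lim_null_comparison)
  let ?g = "\<lambda>N. SC * norm (p N v - R v) + norm (p N (R v) - R (R v))"
  show "\<forall>\<^sub>F N in sequentially. norm (p N (p N v) - R (R v)) \<le> ?g N"
  proof (intro always_eventually allI)
    fix N
    have "p N (p N v) - R (R v) = p N (p N v - R v) + (p N (R v) - R (R v))"
      by (simp add: p_diff)
    then have "norm (p N (p N v) - R (R v)) \<le> norm (p N (p N v - R v)) + norm (p N (R v) - R (R v))"
      by (metis norm_triangle_ineq)
    also have "\<dots> \<le> ?g N" using p_bound[of N "p N v - R v"] by simp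
    finally show "norm (p N (p N v) - R (R v)) \<le> ?g N" .
  qed
  have a: "(\<lambda>N. norm (p N v - R v)) \<longlonglongrightarrow> 0"
    by (rule tendsto_norm_zero[OF LIM_zero[OF p_lim]])
  have b: "(\<lambda>N. norm (p N (R v) - R (R v))) \<longlonglongrightarrow> 0"
    by (rule tendsto_norm_zero[OF LIM_zero[OF p_lim]])
  have "?g \<longlonglongrightarrow> SC * 0 + 0" by (intro tendsto_add tendsto_mult tendsto_const a b)
  then show "?g \<longlonglongrightarrow> 0" by simp
qed

lemma pp_expand:
  "p N (p N v) = (\<Sum>(i,j)\<in>{..<N}\<times>{..<N}. (coef i * coef j) *\<^sub>R (X ^^ (i + j)) v)"
proof -
  have "p N (p N v) = (\<Sum>i<N. coef i *\<^sub>R (X ^^ i) (\<Sum>j<N. coef j *\<^sub>R (X ^^ j) v))"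
    by (simp add: p_def trm_def)
  also have "\<dots> = (\<Sum>i<N. \<Sum>j<N. (coef i * coef j) *\<^sub>R (X ^^ (i + j)) v)"
  proof (rule sum.cong[OF refl])
    fix i
    have "(X ^^ i) (\<Sum>j<N. coef j *\<^sub>R (X ^^ j) v) = (\<Sum>j<N. (X ^^ i) (coef j *\<^sub>R (X ^^ j) v))"
      by (rule bl_sum[OF Xp_bl])
    also have "\<dots> = (\<Sum>j<N. coef j *\<^sub>R (X ^^ (i + j)) v)"
      by (simp add: linear_scale[OF bounded_linear.linear[OF Xp_bl]] Xp_add)
    finally show "coef i *\<^sub>R (X ^^ i) (\<Sum>j<N. coef j *\<^sub>R (X ^^ j) v) = (\<Sum>j<N. (coef i * coef j) *\<^sub>R (X ^^ (i + j)) v)"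
      by (simp add: scaleR_sum_right)
  qed
  also have "\<dots> = (\<Sum>(i,j)\<in>{..<N}\<times>{..<N}. (coef i * coef j) *\<^sub>R (X ^^ (i + j)) v)"
    by (rule sum.cartesian_product)
  finally show ?thesis .
qed

lemma triangle_part:
  assumes N: "N \<ge> 2"
  shows "(\<Sum>(i,j)\<in>{(i,j). i + j < N}. (coef i * coef j) *\<^sub>R (X ^^ (i + j)) v) = v - X v"
proof -
  have "(\<Sum>(i,j)\<in>{(i,j). i + j < N}. (coef i * coef j) *\<^sub>R (X ^^ (i + j)) v)
      = (\<Sum>k<N. \<Sum>i\<le>k. (coef i * coef (k - i)) *\<^sub>R (X ^^ (i + (k - i))) v)"
    by (rule sum.triangle_reindex)
  also have "\<dots> = (\<Sum>k<N. (\<Sum>i\<le>k. coef i * coef (k - i)) *\<^sub>R (X ^^ k) v)"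
    by (intro sum.cong refl) (simp add: scaleR_sum_left)
  also have "\<dots> = (\<Sum>k<N. (if k = 0 then 1 else if k = 1 then -1 else 0) *\<^sub>R (X ^^ k) v)"
    by (simp only: coef_conv)
  also have "\<dots> = v - X v"
  proof -
    obtain m where m: "N = m + 2" using N by (metis add.commute le_Suc_ex)
    show ?thesis unfolding m by (subst sum_first_two) auto
  qed
  finally show ?thesis .
qed

lemma claim2: "(\<lambda>N. p N (p N v)) \<longlonglongrightarrow> v - X v"
proof (rule LIM_zero_cancel, rule Lim_null_comparison)
  let ?T = "\<lambda>N. \<Sum>(i,j)\<in>{..<N}\<times>{..<N} - {(i,j). i + j < N}. \<bar>coef i\<bar> * \<bar>coef j\<bar>"
  let ?g = "\<lambda>(i,j). (coef i * coef j) *\<^sub>R (X ^^ (i + j)) v"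
  show "\<forall>\<^sub>F N in sequentially. norm (p N (p N v) - (v - X v)) \<le> ?T N * norm v"
    unfolding eventually_sequentially
  proof (intro exI allI impI)
    fix N :: nat assume N: "N \<ge> 2"
    have sub: "{(i,j). i + j < N} \<subseteq> {..<N}\<times>{..<N}" by auto
    have "p N (p N v) = sum ?g ({..<N}\<times>{..<N} - {(i,j). i + j < N}) + sum ?g {(i,j). i + j < N}"
      unfolding pp_expand by (rule sum.subset_diff[OF sub]) simp
    then have "p N (p N v) - (v - X v) = sum ?g ({..<N}\<times>{..<N} - {(i,j). i + j < N})"
      using triangle_part[OF N] by simp
    then have "norm (p N (p N v) - (v - X v)) \<le> (\<Sum>x\<in>{..<N}\<times>{..<N} - {(i,j). i + j < N}. norm (?g x))"
      by (simp add: norm_sum)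
    also have "\<dots> \<le> (\<Sum>x\<in>{..<N}\<times>{..<N} - {(i,j). i + j < N}. (case x of (i,j) \<Rightarrow> \<bar>coef i\<bar> * \<bar>coef j\<bar>) * norm v)"
    proof (rule sum_mono)
      fix x :: "nat \<times> nat"
      obtain i j where x: "x = (i,j)" by fastforce
      have "norm (?g x) = \<bar>coef i\<bar> * \<bar>coef j\<bar> * norm ((X ^^ (i + j)) v)"
        by (simp add: x abs_mult)
      also have "\<dots> \<le> \<bar>coef i\<bar> * \<bar>coef j\<bar> * norm v"
        by (intro mult_left_mono Xp_norm) simp
      finally show "norm (?g x) \<le> (case x of (i,j) \<Rightarrow> \<bar>coef i\<bar> * \<bar>coef j\<bar>) * norm v"
        by (simp add: x)
    qed
    also have "\<dots> = ?T N * norm v"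
      by (simp add: sum_distrib_right)
    finally show "norm (p N (p N v) - (v - X v)) \<le> ?T N * norm v" .
  qed
  have "(\<lambda>N. ?T N * norm v) \<longlonglongrightarrow> 0 * norm v"
    by (intro tendsto_mult tendsto_const abs_coef_tail)
  then show "(\<lambda>N. ?T N * norm v) \<longlonglongrightarrow> 0" by simp
qed

lemma R_sq: "R (R v) = v - X v"
  using LIMSEQ_unique[OF claim1 claim2] .

end


lemma vna_sub: "von_neumann_algebra M \<Longrightarrow> A \<in> M \<Longrightarrow> bounded_clinear_op A"
  unfolding von_neumann_algebra_def by blast

lemma vna_add: "von_neumann_algebra M \<Longrightarrow> A \<in> M \<Longrightarrow> B \<in> M \<Longrightarrow> (\<lambda>x. A x + B x) \<in> M"
  unfolding von_neumann_algebra_def by blast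

lemma vna_scale: "von_neumann_algebra M \<Longrightarrow> A \<in> M \<Longrightarrow> (\<lambda>x. scaleC c (A x)) \<in> M"
  unfolding von_neumann_algebra_def by blast

lemma vna_adj: "von_neumann_algebra M \<Longrightarrow> A \<in> M \<Longrightarrow> adj A \<in> M"
  unfolding von_neumann_algebra_def by blast

lemma vna_diff:
  assumes "von_neumann_algebra M" "A \<in> M" "B \<in> M"
  shows "(\<lambda>x. A x - B x) \<in> M"
proof -
  have "(\<lambda>x. A x + (\<lambda>x. scaleC (-1) (B x)) x) \<in> M"
    using assms by (intro vna_add vna_scale)
  moreover have "(\<lambda>x. A x + (\<lambda>x. scaleC (-1) (B x)) x) = (\<lambda>x. A x - B x)"
    by (simp add: scaleC_minus1)
  ultimately show ?thesis by simp
qed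

lemma comm_bcl: "B \<in> commutant M \<Longrightarrow> bounded_clinear_op B"
  unfolding commutant_def by blast

lemma comm_apply: "B \<in> commutant M \<Longrightarrow> A \<in> M \<Longrightarrow> B (A x) = A (B x)"
  unfolding commutant_def by (metis (mono_tags, lifting) comp_apply mem_Collect_eq)

lemma vna_in:
  assumes vN: "von_neumann_algebra M" and T: "bounded_clinear_op T"
    and c: "\<And>B x. B \<in> commutant M \<Longrightarrow> T (B x) = B (T x)"
  shows "T \<in> M"
proof -
  have "T \<circ> B = B \<circ> T" if "B \<in> commutant M" for B using c[OF that] by (auto simp: fun_eq_iff)
  then have "T \<in> commutant (commutant M)"
    unfolding commutant_def[of "commutant M"] using T by blast
  then show ?thesis using vN unfolding von_neumann_algebra_def by simp
qed

lemma comm_adj: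
  assumes vN: "von_neumann_algebra M" and B: "B \<in> commutant M"
  shows "adj B \<in> commutant M"
proof -
  have bB: "bounded_clinear_op B" using comm_bcl[OF B] .
  have "adj B (A x) = A (adj B x)" if A: "A \<in> M" for A x
  proof (rule cinner_ext_right)
    fix z
    have bA: "bounded_clinear_op A" using vna_sub[OF vN A] .
    have aA: "adj A \<in> M" using vna_adj[OF vN A] .
    have "cinner z (adj B (A x)) = cinner (B z) (A x)" by (simp add: adj_prop[OF bB])
    also have "\<dots> = cinner (adj A (B z)) x" by (simp add: adj_prop2[OF bA])
    also have "\<dots> = cinner (B (adj A z)) x" by (simp add: comm_apply[OF B aA])
    also have "\<dots> = cinner (adj A z) (adj B x)" by (simp add: adj_prop[OF bB])
    also have "\<dots> = cinner z (A (adj B x))" by (simp add: adj_prop2[OF bA])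
    finally show "cinner z (adj B (A x)) = cinner z (A (adj B x))" .
  qed
  then show ?thesis unfolding commutant_def using adj_bcl[OF bB] by (auto simp: fun_eq_iff)
qed

lemma scaleC_i_i: "scaleC \<i> (scaleC \<i> y) = - y"
  by (simp add: scaleC_scaleC scaleC_minus1)

lemma decomp:
  "scaleC (1/2) ((a + b) - scaleC \<i> (scaleC \<i> (a - b))) = a"
proof -
  have "(a + b) - scaleC \<i> (scaleC \<i> (a - b)) = scaleC 2 a"
  proof -
    have "scaleC 2 a = a + a" using scaleC_add_left[of 1 1 a] by (simp add: scaleC_one)
    then show ?thesis by (simp add: scaleC_i_i)
  qed
  then show ?thesis by (simp add: scaleC_scaleC scaleC_one)
qed

locale main_setup =
  fixes M :: "('a::chilbert \<Rightarrow> 'a) set" and U :: "'a \<Rightarrow> 'a"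
  assumes fM: "factor M" and UM: "U \<in> M" and sU: "adj U = U" and uU: "unitary_op U"
    and nid: "U \<noteq> id" and nneg: "U \<noteq> (\<lambda>x. - x)"
begin

lemma vN: "von_neumann_algebra M" using fM unfolding factor_def by blast

lemma bU: "bounded_clinear_op U" using uU unfolding unitary_op_def by blast

lemma UU: "U (U x) = x"
proof -
  have "U \<circ> adj U = id" using uU unfolding unitary_op_def by blast
  then show ?thesis using sU by (metis comp_apply id_apply)
qed

lemma saU: "cinner (U x) y = cinner x (U y)"
  using adj_prop[OF bU, of x y] sU by simp

lemma center: "T \<in> M \<Longrightarrow> T \<in> commutant M \<Longrightarrow> \<exists>c. T = (\<lambda>x. scaleC c x)"
  using fM unfolding factor_def by blast

lemma U_not_central: "\<exists>x\<in>M. \<exists>v. U (x v) \<noteq> x (U v)"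
proof (rule ccontr)
  assume "\<not> ?thesis"
  then have c: "\<And>x v. x \<in> M \<Longrightarrow> U (x v) = x (U v)" by blast
  have "U \<in> commutant M" unfolding commutant_def using bU c by (auto simp: fun_eq_iff)
  then obtain c where Uc: "U = (\<lambda>x. scaleC c x)" using center[OF UM] by blast
  from nid obtain v where v: "U v \<noteq> v" by (auto simp: fun_eq_iff)
  have "scaleC (c * c) v = v" using UU[of v] by (simp add: Uc scaleC_scaleC)
  then have "scaleC (c * c - 1) v = 0" by (simp add: scaleC_diff_left scaleC_one)
  moreover have "v \<noteq> 0"
  proof
    assume "v = 0" then show False using v by (simp add: Uc)
  qed
  ultimately have "c * c - 1 = 0" using norm_scaleC[of "c * c - 1" v] by simp
  then have "(c - 1) * (c + 1) = 0" by (simp add: algebra_simps)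
  moreover have "c \<noteq> 1"
  proof
    assume "c = 1" then show False using v by (simp add: Uc scaleC_one)
  qed
  ultimately have "c = -1" by (simp add: add_eq_0_iff) (metis minus_equation_iff)
  then have "U = (\<lambda>x. - x)" by (simp add: Uc scaleC_minus1)
  with nneg show False by simp
qed

lemma sa_noncomm: "\<exists>h\<in>M. (\<forall>x y. cinner (h x) y = cinner x (h y)) \<and> (\<exists>v. U (h v) \<noteq> h (U v))"
proof (rule ccontr)
  assume "\<not> ?thesis"
  then have c: "\<And>h v. h \<in> M \<Longrightarrow> (\<forall>x y. cinner (h x) y = cinner x (h y)) \<Longrightarrow> U (h v) = h (U v)"
    by blast
  obtain x v where xM: "x \<in> M" and xv: "U (x v) \<noteq> x (U v)" using U_not_central by blast
  have bx: "bounded_clinear_op x" using vna_sub[OF vN xM] .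
  define h1 where "h1 = (\<lambda>w. x w + adj x w)"
  define h2 where "h2 = (\<lambda>w. scaleC \<i> ((\<lambda>w. x w - adj x w) w))"
  have h1M: "h1 \<in> M" unfolding h1_def by (intro vna_add xM vna_adj vN)
  have h2M: "h2 \<in> M" unfolding h2_def by (intro vna_scale vna_diff xM vna_adj vN)
  have s1: "\<forall>a b. cinner (h1 a) b = cinner a (h1 b)"
    by (simp add: h1_def cinner_add_left cinner_add_right adj_prop[OF bx] adj_prop2[OF bx])
  have s2: "\<forall>a b. cinner (h2 a) b = cinner a (h2 b)"
    by (simp add: h2_def cinner_scaleC_left cinner_scaleC_right cinner_diff_left cinner_diff_right
        adj_prop[OF bx] adj_prop2[OF bx] algebra_simps)
  have c1: "U (h1 w) = h1 (U w)" for w using c[OF h1M s1] .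
  have c2: "U (h2 w) = h2 (U w)" for w using c[OF h2M s2] .
  have dec: "x w = scaleC (1/2) (h1 w - scaleC \<i> (h2 w))" for w
    unfolding h1_def h2_def using decomp[of "x w" "adj x w"] by simp
  have "U (x v) = scaleC (1/2) (U (h1 v) - scaleC \<i> (U (h2 v)))"
    by (simp add: dec[of v] bcl_scaleC[OF bU] bcl_diff[OF bU])
  also have "\<dots> = x (U v)" by (simp add: c1 c2 dec[of "U v"])
  finally show False using xv by simp
qed

end


lemma bl_scaleC': "bounded_linear (scaleC c :: 'a::chilbert \<Rightarrow> 'a)"
proof (rule bounded_linear_intro[where K="cmod c"])
  show "scaleC c (x + y) = scaleC c x + scaleC c y" for x y :: 'a by (rule scaleC_add_right)
  show "scaleC c (r *\<^sub>R x) = r *\<^sub>R scaleC c x" for r and x :: 'a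
    by (simp add: scaleC_scaleR scaleR_scaleC)
  show "norm (scaleC c x) \<le> norm x * cmod c" for x :: 'a by (simp add: norm_scaleC)
qed

lemma scaleC_eq_0_iff: "scaleC c (x::'a::chilbert) = 0 \<longleftrightarrow> c = 0 \<or> x = 0"
proof -
  have "scaleC c x = 0 \<longleftrightarrow> norm (scaleC c x) = 0" by simp
  also have "\<dots> \<longleftrightarrow> c = 0 \<or> x = 0" by (simp add: norm_scaleC)
  finally show ?thesis .
qed

locale main2 = main_setup M U for M :: "('a::chilbert \<Rightarrow> 'a) set" and U +
  fixes h :: "'a \<Rightarrow> 'a" and v0 :: 'a
  assumes hM: "h \<in> M" and sah: "\<And>x y. cinner (h x) y = cinner x (h y)"
    and hv0: "U (h v0) \<noteq> h (U v0)"
begin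

lemma bh: "bounded_clinear_op h" using vna_sub[OF vN hM] .

definition A :: "'a \<Rightarrow> 'a" where
  "A v = scaleC \<i> (U (h v) - h (U v))"

lemma A_bl: "bounded_linear A"
proof -
  have "bounded_linear (\<lambda>v. U (h v) - h (U v))"
    by (intro bounded_linear_sub bounded_linear_compose[OF bcl_bl[OF bU] bcl_bl[OF bh]]
        bounded_linear_compose[OF bcl_bl[OF bh] bcl_bl[OF bU]])
  from bounded_linear_compose[OF bl_scaleC'[of \<i>] this] show ?thesis
    unfolding A_def[abs_def] .
qed

lemma A_bcl: "bounded_clinear_op A"
proof (rule bclI[OF A_bl])
  fix c x
  show "A (scaleC c x) = scaleC c (A x)"
    by (simp add: A_def bcl_scaleC[OF bU] bcl_scaleC[OF bh] scaleC_scaleC mult.commute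
        flip: scaleC_diff_right)
qed

lemmas A_lin = bounded_linear.linear[OF A_bl]

lemma A_sa: "cinner (A x) y = cinner x (A y)"
  by (simp add: A_def cinner_scaleC_left cinner_scaleC_right cinner_diff_left cinner_diff_right
      saU sah algebra_simps)

lemma A_anti: "U (A v) = - A (U v)"
  by (simp add: A_def bcl_scaleC[OF bU] bcl_diff[OF bU] UU flip: scaleC_minus_right)

lemma A_nz: "A v0 \<noteq> 0"
  using hv0 by (simp add: A_def scaleC_eq_0_iff)

lemma A_comm: "B \<in> commutant M \<Longrightarrow> B (A v) = A (B v)"
  by (simp add: A_def bcl_scaleC[OF comm_bcl] bcl_diff[OF comm_bcl] comm_apply[OF _ UM] comm_apply[OF _ hM])

definition KA :: real where "KA = (SOME K. K > 0 \<and> (\<forall>x. norm (A x) \<le> norm x * K))"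

lemma KA: "KA > 0" "norm (A x) \<le> norm x * KA"
proof -
  have "\<exists>K. K > 0 \<and> (\<forall>x. norm (A x) \<le> norm x * K)" using bcl_pos_bound[OF A_bcl] by blast
  from someI_ex[OF this] show "KA > 0" "norm (A x) \<le> norm x * KA" unfolding KA_def by blast+
qed

definition cA :: real where "cA = 1 / KA\<^sup>2"

lemma cA_pos: "cA > 0" using KA(1) by (simp add: cA_def)

definition X :: "'a \<Rightarrow> 'a" where "X v = v - cA *\<^sub>R A (A v)"

lemma X_bl: "bounded_linear X"
  unfolding X_def[abs_def]
  by (intro bounded_linear_sub bounded_linear_ident
      bounded_linear_compose[OF bounded_linear_scaleR_right bounded_linear_compose[OF A_bl A_bl]])

lemma X_bcl: "bounded_clinear_op X"
proof (rule bclI[OF X_bl])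
  fix c x
  show "X (scaleC c x) = scaleC c (X x)"
    by (simp add: X_def bcl_scaleC[OF A_bcl] scaleC_diff_right scaleC_scaleR scaleR_scaleC mult.commute)
qed

lemma X_sa: "cinner (X x) y = cinner x (X y)"
  by (simp add: X_def cinner_diff_left cinner_diff_right cinner_scaleR_left cinner_scaleR_right A_sa)

lemma X_contr: "norm (X v) \<le> norm v"
proof -
  let ?w = "A (A v)"
  have e1: "cinner v (cA *\<^sub>R ?w) = of_real (cA * (norm (A v))\<^sup>2)"
    by (simp add: cinner_scaleR_right A_sa[symmetric] cinner_self_norm)
  have e2: "(norm (cA *\<^sub>R ?w))\<^sup>2 \<le> cA * (norm (A v))\<^sup>2"
  proof -
    have "(norm (cA *\<^sub>R ?w))\<^sup>2 = cA\<^sup>2 * (norm ?w)\<^sup>2" using cA_pos by (simp add: power_mult_distrib)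
    also have "\<dots> \<le> cA\<^sup>2 * (norm (A v) * KA)\<^sup>2"
      by (intro mult_left_mono power_mono KA(2)) simp_all
    also have "\<dots> = cA * (norm (A v))\<^sup>2"
      using KA(1) by (simp add: cA_def power_mult_distrib power2_eq_square field_simps)
    finally show ?thesis .
  qed
  have "(norm (X v))\<^sup>2 = (norm v)\<^sup>2 - 2 * Re (cinner v (cA *\<^sub>R ?w)) + (norm (cA *\<^sub>R ?w))\<^sup>2"
    unfolding X_def by (rule norm_diff_sq)
  also have "\<dots> \<le> (norm v)\<^sup>2 - cA * (norm (A v))\<^sup>2"
    using e1 e2 by simp
  also have "\<dots> \<le> (norm v)\<^sup>2" using cA_pos by simp
  finally show ?thesis by (rule power2_le_imp_le) simp
qed

sublocale sq: sqrt_setup X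
  by unfold_locales (simp_all add: X_bcl X_sa X_contr)

lemma X_comm:
  assumes bl: "bounded_linear B" and c: "\<And>v. B (A (A v)) = A (A (B v))"
  shows "B (X v) = X (B v)"
  by (simp add: X_def linear_diff[OF bounded_linear.linear[OF bl]]
      linear_scale[OF bounded_linear.linear[OF bl]] c)

definition absA :: "'a \<Rightarrow> 'a" where "absA v = KA *\<^sub>R sq.R v"

lemma absA_bl: "bounded_linear absA"
  unfolding absA_def[abs_def]
  by (rule bounded_linear_compose[OF bounded_linear_scaleR_right sq.R_bl])

lemmas absA_lin = bounded_linear.linear[OF absA_bl]

lemma absA_comm:
  assumes bl: "bounded_linear B" and c: "\<And>v. B (A (A v)) = A (A (B v))"
  shows "B (absA v) = absA (B v)"
proof -
  have "B (sq.R v) = sq.R (B v)" by (rule sq.R_comm[OF bl X_comm[OF bl c]])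
  then show ?thesis by (simp add: absA_def linear_scale[OF bounded_linear.linear[OF bl]])
qed

lemma absA_sq: "absA (absA v) = A (A v)"
proof -
  have "absA (absA v) = (KA * KA) *\<^sub>R sq.R (sq.R v)"
    by (simp add: absA_def bcl_scaleR[OF sq.R_bcl])
  also have "\<dots> = (KA * KA) *\<^sub>R (cA *\<^sub>R A (A v))"
    by (simp add: sq.R_sq X_def)
  also have "\<dots> = A (A v)" using KA(1) by (simp add: cA_def power2_eq_square)
  finally show ?thesis .
qed

lemma absA_A: "absA (A v) = A (absA v)"
  by (rule absA_comm[OF A_bl, symmetric]) simp

lemma UAA: "U (A (A v)) = A (A (U v))"
  by (simp add: A_anti linear_neg[OF A_lin])

lemma absA_U: "absA (U v) = U (absA v)"
  by (rule absA_comm[OF bcl_bl[OF bU] UAA, symmetric])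

lemma absA_B: "B \<in> commutant M \<Longrightarrow> B (absA v) = absA (B v)"
  by (rule absA_comm[OF bcl_bl[OF comm_bcl]]) (simp_all add: A_comm)

lemma absA_sa: "cinner (absA x) y = cinner x (absA y)"
  by (simp add: absA_def cinner_scaleR_left cinner_scaleR_right sq.R_sa)

definition Ap :: "'a \<Rightarrow> 'a" where "Ap v = (1/2::real) *\<^sub>R (absA v + A v)"
definition Am :: "'a \<Rightarrow> 'a" where "Am v = (1/2::real) *\<^sub>R (absA v - A v)"

lemma Ap_bl: "bounded_linear Ap"
  unfolding Ap_def[abs_def]
  by (rule bounded_linear_compose[OF bounded_linear_scaleR_right bounded_linear_add[OF absA_bl A_bl]])

lemma Am_bl: "bounded_linear Am"
  unfolding Am_def[abs_def]
  by (rule bounded_linear_compose[OF bounded_linear_scaleR_right bounded_linear_sub[OF absA_bl A_bl]])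

lemma Am_Ap: "Am (Ap v) = 0"
proof -
  have "absA (Ap v) - A (Ap v)
      = (1/2::real) *\<^sub>R ((absA (absA v) + absA (A v)) - (A (absA v) + A (A v)))"
    by (simp add: Ap_def linear_scale[OF absA_lin] linear_add[OF absA_lin]
        linear_scale[OF A_lin] linear_add[OF A_lin] scaleR_diff_right)
  also have "\<dots> = 0" by (simp add: absA_sq absA_A)
  finally show ?thesis by (simp add: Am_def)
qed

lemma U_Ap: "U (Ap v) = Am (U v)"
  by (simp add: Ap_def Am_def bcl_scaleR[OF bU] bcl_add[OF bU] absA_U A_anti)

lemma Ap_U: "Ap (U v) = U (Am v)"
  using U_Ap[of "U v"] by (metis UU)

lemma Ap_sa: "cinner (Ap x) y = cinner x (Ap y)"
  by (simp add: Ap_def cinner_scaleR_left cinner_scaleR_right cinner_add_left cinner_add_right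
      absA_sa A_sa)

lemma Ap_B: "B \<in> commutant M \<Longrightarrow> B (Ap v) = Ap (B v)"
  by (simp add: Ap_def bcl_scaleR[OF comm_bcl] bcl_add[OF comm_bcl] absA_B A_comm)

lemma Am_B: "B \<in> commutant M \<Longrightarrow> B (Am v) = Am (B v)"
  by (simp add: Am_def bcl_scaleR[OF comm_bcl] bcl_diff[OF comm_bcl] absA_B A_comm)

lemma Ap_nz: "\<exists>v. Ap v \<noteq> 0"
proof (rule ccontr)
  assume "\<not> ?thesis"
  then have z: "Ap v = 0" for v by blast
  have "Am v = 0" for v using U_Ap[of "U v"] z[of "U v"] by (simp add: UU bcl_zero[OF bU])
  then have "Ap v0 - Am v0 = 0" using z by simp
  moreover have "Ap v0 - Am v0 = A v0"
    by (simp add: Ap_def Am_def flip: scaleR_diff_right)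
  ultimately show False using A_nz by simp
qed

end


context main2 begin

lemma absA_scaleC: "absA (scaleC c v) = scaleC c (absA v)"
  by (simp add: absA_def sq.R_scaleC scaleC_scaleR scaleR_scaleC mult.commute)

lemma Am_scaleC: "Am (scaleC c v) = scaleC c (Am v)"
  by (simp add: Am_def absA_scaleC bcl_scaleC[OF A_bcl] scaleC_scaleR scaleR_scaleC mult.commute
      flip: scaleC_diff_right)

definition K0 :: "'a set" where
  "K0 = {y. Am y = 0 \<and> (\<forall>z. Ap z = 0 \<longrightarrow> cinner z y = 0)}"

lemma K0_closed: "closed K0"
proof -
  have eq: "K0 = {y. Am y = (\<lambda>_. 0) y} \<inter> (\<Inter>z\<in>{z. Ap z = 0}. {y. cinner z y = (\<lambda>_. 0) y})"
    unfolding K0_def by auto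
  show ?thesis unfolding eq
    by (intro closed_Int closed_INT ballI closed_Collect_eq continuous_on_const
        linear_continuous_on Am_bl bounded_linear_cinner_right)
qed

lemma K0_csub: "csub K0"
  unfolding csub_def K0_def
  by (auto simp: linear_0[OF bounded_linear.linear[OF Am_bl]] linear_add[OF bounded_linear.linear[OF Am_bl]]
      Am_scaleC cinner_add_right cinner_scaleC_right)

lemma Ap_in_K0: "Ap v \<in> K0"
  unfolding K0_def using Am_Ap Ap_sa[symmetric] by auto

lemma K0_B:
  assumes B: "B \<in> commutant M" and y: "y \<in> K0"
  shows "B y \<in> K0"
proof -
  have bB: "bounded_clinear_op B" using comm_bcl[OF B] .
  have aB: "adj B \<in> commutant M" using comm_adj[OF vN B] .
  have "Am (B y) = 0" using y Am_B[OF B, of y] bcl_zero[OF bB] by (simp add: K0_def)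
  moreover have "cinner z (B y) = 0" if "Ap z = 0" for z
  proof -
    have "Ap (adj B z) = 0" using Ap_B[OF aB, of z] that bcl_zero[OF comm_bcl[OF aB]] by simp
    then have "cinner (adj B z) y = 0" using y by (simp add: K0_def)
    then show ?thesis by (simp add: adj_prop2[OF bB])
  qed
  ultimately show ?thesis by (simp add: K0_def)
qed

definition E :: "'a \<Rightarrow> 'a" where "E = proj K0"

lemma E_bcl: "bounded_clinear_op E"
  unfolding E_def by (rule bcl_proj[OF K0_closed K0_csub])

lemma E_M: "E \<in> M"
proof (rule vna_in[OF vN E_bcl])
  fix B x assume B: "B \<in> commutant M"
  have bB: "bounded_clinear_op B" using comm_bcl[OF B] .
  have aB: "adj B \<in> commutant M" using comm_adj[OF vN B] .
  define y where "y = E x"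
  define r where "r = x - E x"
  have yK: "y \<in> K0" unfolding y_def E_def by (rule proj_in[OF K0_closed K0_csub])
  have rK: "\<forall>k\<in>K0. cinner k r = 0" unfolding r_def E_def using proj_orth[OF K0_closed K0_csub] by blast
  have "E (B y) = B y" unfolding E_def by (rule proj_id[OF K0_closed K0_csub K0_B[OF B yK]])
  moreover have "E (B r) = 0" unfolding E_def
  proof (rule proj_zero[OF K0_closed K0_csub], intro ballI)
    fix k assume k: "k \<in> K0"
    have "cinner k (B r) = cinner (adj B k) r" by (simp add: adj_prop2[OF bB])
    also have "\<dots> = 0" using rK K0_B[OF aB k] by blast
    finally show "cinner k (B r) = 0" .
  qed
  moreover have "B x = B y + B r" by (simp add: y_def r_def flip: bcl_add[OF bB])
  ultimately show "E (B x) = B (E x)"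
    by (simp add: bcl_add[OF E_bcl] y_def)
qed

lemma E_proj: "projection_op E"
  unfolding projection_op_def
proof (intro conjI E_bcl)
  show "adj E = E" by (rule adj_unique) (simp add: E_def proj_sa[OF K0_closed K0_csub])
  show "E \<circ> E = E" by (rule ext) (simp add: E_def proj_idem[OF K0_closed K0_csub])
qed

lemma E_nz: "E \<noteq> (\<lambda>x. 0)"
proof
  assume z: "E = (\<lambda>x. 0)"
  obtain v where v: "Ap v \<noteq> 0" using Ap_nz by blast
  have "E (Ap v) = Ap v" unfolding E_def by (rule proj_id[OF K0_closed K0_csub Ap_in_K0])
  with z v show False by simp
qed

lemma EUE: "E \<circ> U \<circ> E = (\<lambda>x. 0)"
proof (rule ext)
  fix x
  define y where "y = E x"
  have yK: "y \<in> K0" unfolding y_def E_def by (rule proj_in[OF K0_closed K0_csub])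
  have "Ap (U y) = 0" using yK by (simp add: Ap_U K0_def bcl_zero[OF bU])
  then have "\<forall>k\<in>K0. cinner k (U y) = 0"
    by (auto simp: K0_def) (subst cinner_conj, simp)
  then have "E (U y) = 0" unfolding E_def by (rule proj_zero[OF K0_closed K0_csub])
  then show "(E \<circ> U \<circ> E) x = 0" by (simp add: y_def)
qed

lemma result2: "\<exists>E\<in>M. projection_op E \<and> E \<noteq> (\<lambda>x. 0) \<and> E \<circ> U \<circ> E = (\<lambda>x. 0)"
  using E_M E_proj E_nz EUE by blast

end

context main_setup begin

lemma result: "\<exists>E\<in>M. projection_op E \<and> E \<noteq> (\<lambda>x. 0) \<and> E \<circ> U \<circ> E = (\<lambda>x. 0)"
proof -
  obtain h v0 where hM: "h \<in> M" and sah: "\<forall>x y. cinner (h x) y = cinner x (h y)"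
    and hv0: "U (h v0) \<noteq> h (U v0)"
    using sa_noncomm by blast
  interpret m2: main2 M U h v0
    by unfold_locales (use hM sah hv0 in auto)
  show ?thesis by (rule m2.result2)
qed

end

theorem lemma2p3:
  fixes M :: "('a::chilbert \<Rightarrow> 'a) set" and U :: "'a \<Rightarrow> 'a"
  assumes "factor M"
    and "U \<in> M"
    and "adj U = U"
    and "unitary_op U"
    and "U \<noteq> id"
    and "U \<noteq> (\<lambda>x. - x)"
  shows "\<exists>E\<in>M. projection_op E \<and> E \<noteq> (\<lambda>x. 0) \<and> E \<circ> U \<circ> E = (\<lambda>x. 0)"
proof -
  interpret main_setup M U using assms by unfold_locales
  show ?thesis by (rule result)
qed

end
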